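(* Let $L$ be a multisorted algebra in the positive quantifier-free signature satisfying axioms (0), (1), (2). Let $k_1+\dots+k_m=n$, let $c_i\colon k_i\to n$ ($i=1,\dots,m$) be the partitioning cylindrifications, and for each $i$ let $F^i$ be a prime filter on sort $k_i$ of $L$. Then there is a prime filter $G$ on sort $n$ of $L$ such that for each $i=1,\dots,m$ and every $r$ of sort $k_i$, we have $c_i(r)\in G$ if and only if $r\in F^i$.
   Context: Signature. There is a sort $n$ for each natural number $n\ge 0$. For every function $\alpha\colon\{1,\dots,n\}\to\{1,\dots,k\}$ there is a unary function symbol ("substitution") $\alpha\colon n\to k$ (argument of sort $n$, value of sort $k$). For each sort there are constants $0,1$ and binary operations $\vee,\wedge$ (the positive quantifier-free signature). Partitioning cylindrifications: given $k_1,\dots,k_m$ and $n=k_1+\dots+k_m$, the substitutions $c_i\colon k_i\to n$ given by the functions $c_i(l)=l+\sum_{j<i}k_j$. In an algebra, $x\le y$ (also $y\ge x$) means $x=x\wedge y$. Axioms: (0) For all partitioning cylindrifications $c_1,\dots,c_m$, $c_i\colon k_i\to k_1+\dots+k_m$, and all $r_i,s_i$ of sort $k_i$: if $\bigvee_{i=1}^m c_i(s_i)\ge\bigwedge_{i=1}^m c_i(r_i)$ then $s_i\ge r_i$ for some $i$ (including the case $m=0$, which says $0\ge1$ fails in sort $0$). (1) Each sort is a bounded distributive lattice under $0,1,\vee,\wedge$. (2) Every substitution preserves $0,1,\vee,\wedge$. A prime filter of a bounded distributive lattice is a proper, nonempty, upward-closed subset closed under $\wedge$ such that $x\vee y\in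 F$ implies $x\in F$ or $y\in F$. The Boolean prime ideal theorem is assumed. *)

theory Defs
  imports "HOL-Library.FuncSet"
begin

(* A substitution symbol alpha : n -> k is a function {1..n} -> {1..k},
  represented extensionally (alpha \<in> {1..n} \<rightarrow>\<^sub>E {1..k});
  sub n k alpha is its interpretation. *)

record 'a msa =
  car  :: "nat \<Rightarrow> 'a set"
  zer  :: "nat \<Rightarrow> 'a"
  one  :: "nat \<Rightarrow> 'a"
  join :: "nat \<Rightarrow> 'a \<Rightarrow> 'a \<Rightarrow> 'a"
  meet :: "nat \<Rightarrow> 'a \<Rightarrow> 'a \<Rightarrow> 'a"
  sub  :: "nat \<Rightarrow> nat \<Rightarrow> (nat \<Rightarrow> nat) \<Rightarrow> 'a \<Rightarrow> 'a"

definition mle :: "'a msa \<Rightarrow> nat \<Rightarrow> 'a \<Rightarrow> 'a \<Rightarrow> bool" where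
  "mle L n x y \<longleftrightarrow> x = meet L n x y"

definition bigjoin :: "'a msa \<Rightarrow> nat \<Rightarrow> 'a list \<Rightarrow> 'a" where
  "bigjoin L n xs = foldr (join L n) xs (zer L n)"

definition bigmeet :: "'a msa \<Rightarrow> nat \<Rightarrow> 'a list \<Rightarrow> 'a" where
  "bigmeet L n xs = foldr (meet L n) xs (one L n)"

(* Partitioning cylindrifications for ks = [k_1,...,k_m] (0-indexed i < m):
  c_i(l) = l + sum_{j<i} k_j, as a function {1..k_i} -> {1..k_1+...+k_m}. *)
definition cyl :: "nat list \<Rightarrow> nat \<Rightarrow> (nat \<Rightarrow> nat)" where
  "cyl ks i = restrict (\<lambda>l. l + sum_list (take i ks)) {1..ks ! i}"

definition cylop :: "'a msa \<Rightarrow> nat list \<Rightarrow> nat \<Rightarrow> 'a \<Rightarrow> 'a" where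
  "cylop L ks i = sub L (ks ! i) (sum_list ks) (cyl ks i)"

definition bdl_sort :: "'a msa \<Rightarrow> nat \<Rightarrow> bool" where
  "bdl_sort L n \<longleftrightarrow>
     zer L n \<in> car L n \<and> one L n \<in> car L n \<and>
     (\<forall>x\<in>car L n. \<forall>y\<in>car L n. join L n x y \<in> car L n \<and> meet L n x y \<in> car L n) \<and>
     (\<forall>x\<in>car L n. \<forall>y\<in>car L n. \<forall>z\<in>car L n.
        join L n (join L n x y) z = join L n x (join L n y z) \<and>
        meet L n (meet L n x y) z = meet L n x (meet L n y z) \<and>
        meet L n x (join L n y z) = join L n (meet L n x y) (meet L n x z)) \<and>
     (\<forall>x\<in>car L n. \<forall>y\<in>car L n.
        join L n x y = join L n y x \<and> meet L n x y = meet L n y x \<and>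
        join L n x (meet L n x y) = x \<and> meet L n x (join L n x y) = x) \<and>
     (\<forall>x\<in>car L n. join L n (zer L n) x = x \<and> meet L n (one L n) x = x)"

definition subst_hom :: "'a msa \<Rightarrow> bool" where
  "subst_hom L \<longleftrightarrow>
     (\<forall>n k \<alpha>. \<alpha> \<in> {1..n} \<rightarrow>\<^sub>E {1..k} \<longrightarrow>
        (\<forall>x\<in>car L n. sub L n k \<alpha> x \<in> car L k) \<and>
        sub L n k \<alpha> (zer L n) = zer L k \<and> sub L n k \<alpha> (one L n) = one L k \<and>
        (\<forall>x\<in>car L n. \<forall>y\<in>car L n.
           sub L n k \<alpha> (join L n x y) = join L k (sub L n k \<alpha> x) (sub L n k \<alpha> y) \<and>
           sub L n k \<alpha> (meet L n x y) = meet L k (sub L n k \<alpha> x) (sub L n k \<alpha> y)))"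

definition axiom0 :: "'a msa \<Rightarrow> bool" where
  "axiom0 L \<longleftrightarrow>
     (\<forall>ks r s. (\<forall>i<length ks. r i \<in> car L (ks ! i) \<and> s i \<in> car L (ks ! i)) \<longrightarrow>
        mle L (sum_list ks)
          (bigmeet L (sum_list ks) (map (\<lambda>i. cylop L ks i (r i)) [0..<length ks]))
          (bigjoin L (sum_list ks) (map (\<lambda>i. cylop L ks i (s i)) [0..<length ks]))
        \<longrightarrow> (\<exists>i<length ks. mle L (ks ! i) (r i) (s i)))"

definition msalg :: "'a msa \<Rightarrow> bool" where
  "msalg L \<longleftrightarrow> axiom0 L \<and> (\<forall>n. bdl_sort L n) \<and> subst_hom L"

definition prime_filter :: "'a msa \<Rightarrow> nat \<Rightarrow> 'a set \<Rightarrow> bool" where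
  "prime_filter L n F \<longleftrightarrow>
     F \<subseteq> car L n \<and> F \<noteq> car L n \<and> F \<noteq> {} \<and>
     (\<forall>x\<in>F. \<forall>y\<in>car L n. mle L n x y \<longrightarrow> y \<in> F) \<and>
     (\<forall>x\<in>F. \<forall>y\<in>F. meet L n x y \<in> F) \<and>
     (\<forall>x\<in>car L n. \<forall>y\<in>car L n. join L n x y \<in> F \<longrightarrow> x \<in> F \<or> y \<in> F)"

end

theory Submission imports Defs begin

locale srt = fixes L :: "'a msa" and n :: nat
  assumes bdl: "bdl_sort L n"
begin

abbreviation "A \<equiv> car L n"
abbreviation "mt \<equiv> meet L n"
abbreviation "jn \<equiv> join L n"
abbreviation "le \<equiv> mle L n"

lemma Z: "zer L n \<in> A" and O: "one L n \<in> A"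
  and cm: "x \<in> A \<Longrightarrow> y \<in> A \<Longrightarrow> mt x y \<in> A"
  and cj: "x \<in> A \<Longrightarrow> y \<in> A \<Longrightarrow> jn x y \<in> A"
  using bdl unfolding bdl_sort_def by auto

lemma ja: "x \<in> A \<Longrightarrow> y \<in> A \<Longrightarrow> z \<in> A \<Longrightarrow> jn (jn x y) z = jn x (jn y z)"
  and ma: "x \<in> A \<Longrightarrow> y \<in> A \<Longrightarrow> z \<in> A \<Longrightarrow> mt (mt x y) z = mt x (mt y z)"
  and dist: "x \<in> A \<Longrightarrow> y \<in> A \<Longrightarrow> z \<in> A \<Longrightarrow> mt x (jn y z) = jn (mt x y) (mt x z)"
  and jc: "x \<in> A \<Longrightarrow> y \<in> A \<Longrightarrow> jn x y = jn y x"
  and mc: "x \<in> A \<Longrightarrow> y \<in> A \<Longrightarrow> mt x y = mt y x"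
  and ab1: "x \<in> A \<Longrightarrow> y \<in> A \<Longrightarrow> jn x (mt x y) = x"
  and ab2: "x \<in> A \<Longrightarrow> y \<in> A \<Longrightarrow> mt x (jn x y) = x"
  and z0: "x \<in> A \<Longrightarrow> jn (zer L n) x = x"
  and o1: "x \<in> A \<Longrightarrow> mt (one L n) x = x"
  using bdl unfolding bdl_sort_def by blast+

lemma mi: "x \<in> A \<Longrightarrow> mt x x = x"
proof -
  assume x: "x \<in> A"
  have "mt x (jn x (mt x x)) = x" using ab2 x cm by blast
  moreover have "jn x (mt x x) = x" using ab1 x by blast
  ultimately show ?thesis by simp
qed

lemma refl: "x \<in> A \<Longrightarrow> le x x"
  by (simp add: mle_def mi)

lemma trans: "x \<in> A \<Longrightarrow> y \<in> A \<Longrightarrow> z \<in> A \<Longrightarrow> le x y \<Longrightarrow> le y z \<Longrightarrow> le x z"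
  unfolding mle_def proof -
  assume a: "x \<in> A" "y \<in> A" "z \<in> A" "x = mt x y" "y = mt y z"
  have "mt x z = mt (mt x y) z" using a(4)[symmetric] by simp
  also have "\<dots> = mt x (mt y z)" using ma a by blast
  also have "\<dots> = x" using a(4)[symmetric] a(5)[symmetric] by simp
  finally show "x = mt x z" by simp
qed

lemma mlb1: "x \<in> A \<Longrightarrow> y \<in> A \<Longrightarrow> le (mt x y) x"
  unfolding mle_def proof -
  assume a: "x \<in> A" "y \<in> A"
  have "mt (mt x y) x = mt x (mt y x)" using ma a by blast
  also have "\<dots> = mt x (mt x y)" using mc a by simp
  also have "\<dots> = mt (mt x x) y" using ma a by simp
  also have "\<dots> = mt x y" using mi a by simp
  finally show "mt x y = mt (mt x y) x" by simp
qed

lemma mlb2: "x \<in> A \<Longrightarrow> y \<in> A \<Longrightarrow> le (mt x y) y"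
  unfolding mle_def proof -
  assume a: "x \<in> A" "y \<in> A"
  have "mt (mt x y) y = mt x (mt y y)" using ma a by blast
  then show "mt x y = mt (mt x y) y" using mi a by simp
qed

lemma mglb: "w \<in> A \<Longrightarrow> x \<in> A \<Longrightarrow> y \<in> A \<Longrightarrow> le w x \<Longrightarrow> le w y \<Longrightarrow> le w (mt x y)"
  unfolding mle_def proof -
  assume a: "w \<in> A" "x \<in> A" "y \<in> A" "w = mt w x" "w = mt w y"
  have "mt w (mt x y) = mt (mt w x) y" using ma[OF a(1,2,3)] by simp
  also have "\<dots> = w" using a(4)[symmetric] a(5)[symmetric] by simp
  finally show "w = mt w (mt x y)" by simp
qed

lemma jub1: "x \<in> A \<Longrightarrow> y \<in> A \<Longrightarrow> le x (jn x y)"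
  unfolding mle_def using ab2 by simp

lemma jub2: "x \<in> A \<Longrightarrow> y \<in> A \<Longrightarrow> le y (jn x y)"
  unfolding mle_def using ab2 jc by metis

lemma jlub: "x \<in> A \<Longrightarrow> y \<in> A \<Longrightarrow> z \<in> A \<Longrightarrow> le x z \<Longrightarrow> le y z \<Longrightarrow> le (jn x y) z"
  unfolding mle_def proof -
  assume a: "x \<in> A" "y \<in> A" "z \<in> A" "x = mt x z" "y = mt y z"
  have "mt (jn x y) z = mt z (jn x y)" using mc a cj by simp
  also have "\<dots> = jn (mt z x) (mt z y)" using dist a by simp
  also have "\<dots> = jn x y" using mc a(1,2,3) a(4)[symmetric] a(5)[symmetric] by simp
  finally show "jn x y = mt (jn x y) z" by simp
qed

lemma top: "x \<in> A \<Longrightarrow> le x (one L n)"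
  unfolding mle_def using o1 mc O by simp

lemma bot: "x \<in> A \<Longrightarrow> le (zer L n) x"
  unfolding mle_def proof -
  assume a: "x \<in> A"
  have "mt (zer L n) (jn (zer L n) x) = zer L n" using ab2 a Z by simp
  then show "zer L n = mt (zer L n) x" using z0 a by simp
qed

lemma mmono: "h \<in> A \<Longrightarrow> g \<in> A \<Longrightarrow> x \<in> A \<Longrightarrow> le h g \<Longrightarrow> le (mt h x) (mt g x)"
proof -
  assume a: "h \<in> A" "g \<in> A" "x \<in> A" "le h g"
  have "le (mt h x) g" using trans[OF cm[OF a(1,3)] a(1,2) mlb1[OF a(1,3)] a(4)] .
  then show ?thesis using mglb[OF cm[OF a(1,3)] a(2,3)] mlb2[OF a(1,3)] by blast
qed

lemma bm_in: "set xs \<subseteq> A \<Longrightarrow> bigmeet L n xs \<in> A"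
  by (induction xs) (auto simp: bigmeet_def O cm)
lemma bj_in: "set xs \<subseteq> A \<Longrightarrow> bigjoin L n xs \<in> A"
  by (induction xs) (auto simp: bigjoin_def Z cj)

lemma bm_lb: "set xs \<subseteq> A \<Longrightarrow> x \<in> set xs \<Longrightarrow> le (bigmeet L n xs) x"
proof (induction xs)
  case (Cons a xs)
  have e: "bigmeet L n (a#xs) = mt a (bigmeet L n xs)" by (simp add: bigmeet_def)
  have aA: "a \<in> A" and sA: "set xs \<subseteq> A" using Cons.prems by auto
  have bA: "bigmeet L n xs \<in> A" using bm_in sA .
  show ?case
  proof (cases "x = a")
    case True then show ?thesis using mlb1[OF aA bA] e by simp
  next
    case False then have "x \<in> set xs" using Cons.prems by simp
    then have "le (bigmeet L n xs) x" "x \<in> A" using Cons.IH sA by auto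
    then show ?thesis using trans[OF cm[OF aA bA] bA] mlb2[OF aA bA] e by simp
  qed
qed simp

lemma bm_glb: "set xs \<subseteq> A \<Longrightarrow> w \<in> A \<Longrightarrow> (\<forall>x\<in>set xs. le w x) \<Longrightarrow> le w (bigmeet L n xs)"
proof (induction xs)
  case Nil thus ?case by (simp add: bigmeet_def top)
next
  case (Cons a xs)
  have e: "bigmeet L n (a#xs) = mt a (bigmeet L n xs)" by (simp add: bigmeet_def)
  have aA: "a \<in> A" and sA: "set xs \<subseteq> A" using Cons.prems by auto
  show ?case using mglb[OF Cons.prems(2) aA bm_in[OF sA]] Cons e sA by simp
qed

lemma bj_ub: "set xs \<subseteq> A \<Longrightarrow> x \<in> set xs \<Longrightarrow> le x (bigjoin L n xs)"
proof (induction xs)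
  case (Cons a xs)
  have e: "bigjoin L n (a#xs) = jn a (bigjoin L n xs)" by (simp add: bigjoin_def)
  have aA: "a \<in> A" and sA: "set xs \<subseteq> A" using Cons.prems by auto
  have bA: "bigjoin L n xs \<in> A" using bj_in sA .
  show ?case
  proof (cases "x = a")
    case True then show ?thesis using jub1[OF aA bA] e by simp
  next
    case False then have "x \<in> set xs" using Cons.prems by simp
    then have "le x (bigjoin L n xs)" "x \<in> A" using Cons.IH sA by auto
    then show ?thesis using trans[OF _ bA cj[OF aA bA]] jub2[OF aA bA] e by simp
  qed
qed simp

lemma bj_lub: "set xs \<subseteq> A \<Longrightarrow> w \<in> A \<Longrightarrow> (\<forall>x\<in>set xs. le x w) \<Longrightarrow> le (bigjoin L n xs) w"
proof (induction xs)
  case Nil thus ?case by (simp add: bigjoin_def bot)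
next
  case (Cons a xs)
  have e: "bigjoin L n (a#xs) = jn a (bigjoin L n xs)" by (simp add: bigjoin_def)
  have aA: "a \<in> A" and sA: "set xs \<subseteq> A" using Cons.prems by auto
  show ?case using jlub[OF aA bj_in[OF sA] Cons.prems(2)] Cons e sA by simp
qed

definition "isF G \<longleftrightarrow> G \<subseteq> A \<and> (\<forall>x\<in>G. \<forall>y\<in>A. le x y \<longrightarrow> y \<in> G) \<and> (\<forall>x\<in>G. \<forall>y\<in>G. mt x y \<in> G)"

lemma pft:
  assumes F: "isF \<Phi>" "one L n \<in> \<Phi>"
    and I: "\<Psi> \<subseteq> A" "zer L n \<in> \<Psi>" "\<forall>y\<in>\<Psi>. \<forall>x\<in>A. le x y \<longrightarrow> x \<in> \<Psi>" "\<forall>x\<in>\<Psi>. \<forall>y\<in>\<Psi>. jn x y \<in> \<Psi>"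
    and D: "\<Phi> \<inter> \<Psi> = {}"
  shows "\<exists>G. prime_filter L n G \<and> \<Phi> \<subseteq> G \<and> G \<inter> \<Psi> = {}"
proof -
  have down: "x \<in> \<Psi>" if "y \<in> \<Psi>" "x \<in> A" "le x y" for x y using I(3) that by blast
  define C where "C = {G. isF G \<and> \<Phi> \<subseteq> G \<and> G \<inter> \<Psi> = {}}"
  have "\<exists>M\<in>C. \<forall>X\<in>C. M \<subseteq> X \<longrightarrow> X = M"
  proof (rule subset_Zorn_nonempty)
    show "C \<noteq> {}" using F D by (auto simp: C_def)
  next
    fix K assume K: "K \<noteq> {}" "subset.chain C K"
    hence KC: "K \<subseteq> C" and ch: "\<forall>X\<in>K. \<forall>Y\<in>K. X \<subseteq> Y \<or> Y \<subseteq> X"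
      by (auto simp: subset.chain_def)
    have "isF (\<Union>K)"
      unfolding isF_def
    proof (intro conjI ballI impI)
      show "\<Union>K \<subseteq> A" using KC by (auto simp: C_def isF_def)
    next
      fix x y assume a: "x \<in> \<Union>K" "y \<in> A" "le x y"
      then obtain X where X: "X \<in> K" "x \<in> X" by auto
      then have "isF X" using KC by (auto simp: C_def)
      then have "y \<in> X" using X a unfolding isF_def by blast
      then show "y \<in> \<Union>K" using X by blast
    next
      fix x y assume "x \<in> \<Union>K" "y \<in> \<Union>K"
      then obtain X Y where XY: "X \<in> K" "Y \<in> K" "x \<in> X" "y \<in> Y" by auto
      with ch have "x \<in> X \<and> y \<in> X \<and> X \<in> K \<or> x \<in> Y \<and> y \<in> Y \<and> Y \<in> K" by blast
      then obtain Z where Z: "Z \<in> K" "x \<in> Z" "y \<in> Z" by blast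
      then have "isF Z" using KC by (auto simp: C_def)
      then have "mt x y \<in> Z" using Z unfolding isF_def by blast
      then show "mt x y \<in> \<Union>K" using Z by blast
    qed
    moreover have "\<Phi> \<subseteq> \<Union>K" using K KC by (auto simp: C_def)
    moreover have "\<Union>K \<inter> \<Psi> = {}" using KC by (auto simp: C_def)
    ultimately show "\<Union>K \<in> C" by (simp add: C_def)
  qed
  then obtain G where G: "G \<in> C" and mx: "\<forall>X\<in>C. G \<subseteq> X \<longrightarrow> X = G" by blast
  have GF: "isF G" and PG: "\<Phi> \<subseteq> G" and GD: "G \<inter> \<Psi> = {}" using G by (auto simp: C_def)
  have GA: "G \<subseteq> A" and up: "\<forall>x\<in>G. \<forall>y\<in>A. le x y \<longrightarrow> y \<in> G" and mG: "\<forall>x\<in>G. \<forall>y\<in>G. mt x y \<in> G"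
    using GF by (auto simp: isF_def)
  have ext: "\<exists>g\<in>G. mt g x \<in> \<Psi>" if x: "x \<in> A" "x \<notin> G" for x
  proof (rule ccontr)
    assume nx: "\<not> (\<exists>g\<in>G. mt g x \<in> \<Psi>)"
    define H where "H = {z \<in> A. \<exists>g\<in>G. le (mt g x) z}"
    have "isF H" unfolding isF_def
    proof (intro conjI ballI impI)
      show "H \<subseteq> A" by (auto simp: H_def)
    next
      fix a b assume ab: "a \<in> H" "b \<in> A" "le a b"
      then obtain g where g: "g \<in> G" "a \<in> A" "le (mt g x) a" by (auto simp: H_def)
      have gA: "g \<in> A" using g GA by auto
      have "le (mt g x) b" using trans[OF cm[OF gA x(1)] g(2) ab(2) g(3) ab(3)] .
      then show "b \<in> H" unfolding H_def using ab(2) g(1) by blast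
    next
      fix a b assume "a \<in> H" "b \<in> H"
      then obtain g h where gh: "g \<in> G" "h \<in> G" "a \<in> A" "b \<in> A" "le (mt g x) a" "le (mt h x) b"
        by (auto simp: H_def)
      have gA: "g \<in> A" "h \<in> A" using gh GA by auto
      have kA: "mt g h \<in> A" using cm[OF gA] .
      have kx: "mt (mt g h) x \<in> A" using cm[OF kA x(1)] .
      have "le (mt (mt g h) x) (mt g x)" using mmono[OF kA gA(1) x(1) mlb1[OF gA]] .
      hence 1: "le (mt (mt g h) x) a" using trans[OF kx cm[OF gA(1) x(1)] gh(3) _ gh(5)] by blast
      have "le (mt (mt g h) x) (mt h x)" using mmono[OF kA gA(2) x(1) mlb2[OF gA]] .
      hence 2: "le (mt (mt g h) x) b" using trans[OF kx cm[OF gA(2) x(1)] gh(4) _ gh(6)] by blast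
      have "le (mt (mt g h) x) (mt a b)" using mglb[OF kx gh(3,4) 1 2] .
      moreover have "mt g h \<in> G" using mG gh by blast
      moreover have "mt a b \<in> A" using cm[OF gh(3,4)] .
      ultimately show "mt a b \<in> H" unfolding H_def by blast
    qed
    moreover have GH: "G \<subseteq> H"
    proof
      fix g assume g: "g \<in> G"
      then have gA: "g \<in> A" using GA by auto
      have "le (mt g x) g" using mlb1[OF gA x(1)] .
      then show "g \<in> H" unfolding H_def using g gA by blast
    qed
    moreover have "H \<inter> \<Psi> = {}"
    proof (rule ccontr)
      assume "H \<inter> \<Psi> \<noteq> {}"
      then obtain z g where zg: "z \<in> \<Psi>" "g \<in> G" "le (mt g x) z" by (auto simp: H_def)
      have gA: "g \<in> A" using zg GA by auto
      have "mt g x \<in> \<Psi>" using down[OF zg(1) cm[OF gA x(1)] zg(3)] .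
      with nx zg(2) show False by blast
    qed
    ultimately have "H \<in> C" using PG by (auto simp: C_def)
    moreover have "x \<in> H"
    proof -
      have "one L n \<in> G" using PG F(2) by blast
      moreover have "le (mt (one L n) x) x" using mlb2[OF O x(1)] .
      ultimately show ?thesis unfolding H_def using x(1) by blast
    qed
    ultimately show False using mx GH x(2) by blast
  qed
  have "prime_filter L n G"
    unfolding prime_filter_def
  proof (intro conjI ballI impI)
    show "G \<subseteq> A" by (rule GA)
    show "G \<noteq> A" using GD I(2) Z by blast
    show "G \<noteq> {}" using PG F(2) by blast
  next
    fix x y assume "x \<in> G" "y \<in> A" "le x y" then show "y \<in> G" using up by blast
  next
    fix x y assume "x \<in> G" "y \<in> G" then show "mt x y \<in> G" using mG by blast
  next
    fix x y assume xy: "x \<in> A" "y \<in> A" "jn x y \<in> G"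
    show "x \<in> G \<or> y \<in> G"
    proof (rule ccontr)
      assume "\<not> (x \<in> G \<or> y \<in> G)"
      then obtain g h where gh: "g \<in> G" "h \<in> G" "mt g x \<in> \<Psi>" "mt h y \<in> \<Psi>"
        using ext xy by blast
      have gA: "g \<in> A" "h \<in> A" using gh GA by auto
      have kA: "mt g h \<in> A" using cm[OF gA] .
      have "le (mt (mt g h) x) (mt g x)" using mmono[OF kA gA(1) xy(1) mlb1[OF gA]] .
      hence a: "mt (mt g h) x \<in> \<Psi>" using down[OF gh(3) cm[OF kA xy(1)]] by blast
      have "le (mt (mt g h) y) (mt h y)" using mmono[OF kA gA(2) xy(2) mlb2[OF gA]] .
      hence b: "mt (mt g h) y \<in> \<Psi>" using down[OF gh(4) cm[OF kA xy(2)]] by blast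
      have "mt (mt g h) (jn x y) = jn (mt (mt g h) x) (mt (mt g h) y)" using dist[OF kA xy(1,2)] .
      moreover have "jn (mt (mt g h) x) (mt (mt g h) y) \<in> \<Psi>" using a b I(4) by blast
      ultimately have "mt (mt g h) (jn x y) \<in> \<Psi>" by simp
      moreover have "mt (mt g h) (jn x y) \<in> G" using mG gh xy(3) by blast
      ultimately show False using GD by blast
    qed
  qed
  then show ?thesis using PG GD by blast
qed

end

lemma sum_take_le: "sum_list (take j ks) \<le> sum_list (ks::nat list)"
  by (metis append_take_drop_id le_add1 sum_list_append)

lemma cyl_fun: "i < length ks \<Longrightarrow> cyl ks i \<in> {1..ks!i} \<rightarrow>\<^sub>E {1..sum_list ks}"
proof -
  assume i: "i < length ks"
  have "sum_list (take (Suc i) ks) = sum_list (take i ks) + ks!i"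
    using i by (simp add: take_Suc_conv_app_nth)
  moreover have "sum_list (take (Suc i) ks) \<le> sum_list ks" by (rule sum_take_le)
  ultimately show ?thesis unfolding cyl_def by auto
qed

lemma cyl_hom:
  assumes "subst_hom L" "i < length ks"
  shows "\<And>x. x \<in> car L (ks!i) \<Longrightarrow> cylop L ks i x \<in> car L (sum_list ks)"
    and "cylop L ks i (zer L (ks!i)) = zer L (sum_list ks)"
    and "cylop L ks i (one L (ks!i)) = one L (sum_list ks)"
    and "\<And>x y. x \<in> car L (ks!i) \<Longrightarrow> y \<in> car L (ks!i) \<Longrightarrow>
          cylop L ks i (meet L (ks!i) x y) = meet L (sum_list ks) (cylop L ks i x) (cylop L ks i y)"
    and "\<And>x y. x \<in> car L (ks!i) \<Longrightarrow> y \<in> car L (ks!i) \<Longrightarrow>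
          cylop L ks i (join L (ks!i) x y) = join L (sum_list ks) (cylop L ks i x) (cylop L ks i y)"
  using assms(1) cyl_fun[OF assms(2)] unfolding subst_hom_def cylop_def by blast+

lemma cyl_mono:
  assumes "subst_hom L" "i < length ks" "x \<in> car L (ks!i)" "y \<in> car L (ks!i)" "mle L (ks!i) x y"
  shows "mle L (sum_list ks) (cylop L ks i x) (cylop L ks i y)"
  using assms cyl_hom(4)[OF assms(1,2) assms(3,4)] unfolding mle_def by metis

lemma pf_one: "bdl_sort L k \<Longrightarrow> prime_filter L k P \<Longrightarrow> one L k \<in> P"
proof -
  assume b: "bdl_sort L k" and p: "prime_filter L k P"
  interpret srt L k using b by (simp add: srt_def)
  obtain x where "x \<in> P" using p unfolding prime_filter_def by blast
  moreover have "x \<in> A" using p \<open>x \<in> P\<close> unfolding prime_filter_def by blast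
  ultimately show ?thesis using p top O unfolding prime_filter_def by blast
qed

lemma pf_zer: "bdl_sort L k \<Longrightarrow> prime_filter L k P \<Longrightarrow> zer L k \<notin> P"
proof
  assume b: "bdl_sort L k" and p: "prime_filter L k P" and z: "zer L k \<in> P"
  interpret srt L k using b by (simp add: srt_def)
  have "A \<subseteq> P" using p z bot unfolding prime_filter_def by blast
  then show False using p unfolding prime_filter_def by blast
qed

lemma pf_bm: "bdl_sort L k \<Longrightarrow> prime_filter L k P \<Longrightarrow> set ys \<subseteq> P \<Longrightarrow> bigmeet L k ys \<in> P"
proof (induction ys)
  case Nil thus ?case using pf_one by (simp add: bigmeet_def)
next
  case (Cons a ys) thus ?case unfolding prime_filter_def by (simp add: bigmeet_def)
qed

lemma pf_bj: "bdl_sort L k \<Longrightarrow> prime_filter L k P \<Longrightarrow> set ys \<subseteq> car L k - P \<Longrightarrow> bigjoin L k ys \<in> car L k - P"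
proof (induction ys)
  case Nil thus ?case using pf_zer by (simp add: bigjoin_def bdl_sort_def)
next
  case (Cons a ys)
  have "bigjoin L k ys \<in> car L k - P" using Cons by simp
  moreover have "a \<in> car L k - P" using Cons by simp
  moreover have "join L k a (bigjoin L k ys) \<in> car L k" using Cons(2) calculation unfolding bdl_sort_def by blast
  ultimately show ?case using Cons(3) unfolding prime_filter_def by (simp add: bigjoin_def) blast
qed

theorem lemma3p5:
  fixes L :: "'a msa" and ks :: "nat list" and F :: "nat \<Rightarrow> 'a set"
  assumes "msalg L"
    and "\<forall>i<length ks. prime_filter L (ks ! i) (F i)"
  shows "\<exists>G. prime_filter L (sum_list ks) G \<and>
           (\<forall>i<length ks. \<forall>r\<in>car L (ks ! i). cylop L ks i r \<in> G \<longleftrightarrow> r \<in> F i)"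
proof -
  define N where "N = sum_list ks"
  define m where "m = length ks"
  have B: "\<And>k. bdl_sort L k" and SH: "subst_hom L" and AX: "axiom0 L"
    using assms(1) by (auto simp: msalg_def)
  have S: "\<And>k. srt L k" using B by (simp add: srt_def)
  interpret srt L N by (rule S)
  have PF: "\<And>i. i < m \<Longrightarrow> prime_filter L (ks!i) (F i)" using assms(2) m_def by blast
  have FA: "\<And>i. i < m \<Longrightarrow> F i \<subseteq> car L (ks!i)" using PF unfolding prime_filter_def by blast
  define c where "c = (\<lambda>p. cylop L ks (fst p) (snd p))"
  have cA: "\<And>i x. i < m \<Longrightarrow> x \<in> car L (ks!i) \<Longrightarrow> cylop L ks i x \<in> A"
    using cyl_hom(1)[OF SH] N_def m_def by blast
  define goodx where "goodx = (\<lambda>xs::(nat \<times> 'a) list. \<forall>p\<in>set xs. fst p < m \<and> snd p \<in> F (fst p))"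
  define goody where "goody = (\<lambda>ys::(nat \<times> 'a) list. \<forall>p\<in>set ys. fst p < m \<and> snd p \<in> car L (ks!fst p) - F (fst p))"
  have gxA: "set (map c xs) \<subseteq> A" if "goodx xs" for xs
  proof
    fix y assume "y \<in> set (map c xs)"
    then obtain p where p: "p \<in> set xs" "y = c p" by auto
    then have "fst p < m" "snd p \<in> F (fst p)" using that unfolding goodx_def by auto
    then show "y \<in> A" using p FA cA unfolding c_def by blast
  qed
  have gyA: "set (map c ys) \<subseteq> A" if "goody ys" for ys
    using that cA unfolding goody_def c_def by auto
  define \<Phi> where "\<Phi> = {z \<in> A. \<exists>xs. goodx xs \<and> le (bigmeet L N (map c xs)) z}"
  define \<Psi> where "\<Psi> = {z \<in> A. \<exists>ys. goody ys \<and> le z (bigjoin L N (map c ys))}"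
  have isFP: "isF \<Phi>" unfolding isF_def
  proof (intro conjI ballI impI)
    show "\<Phi> \<subseteq> A" by (auto simp: \<Phi>_def)
  next
    fix x y assume a: "x \<in> \<Phi>" "y \<in> A" "le x y"
    then obtain xs where xs: "goodx xs" "le (bigmeet L N (map c xs)) x" "x \<in> A" by (auto simp: \<Phi>_def)
    have "le (bigmeet L N (map c xs)) y" using trans[OF bm_in[OF gxA[OF xs(1)]] xs(3) a(2) xs(2) a(3)] .
    then show "y \<in> \<Phi>" using a(2) xs(1) by (auto simp: \<Phi>_def)
  next
    fix x y assume "x \<in> \<Phi>" "y \<in> \<Phi>"
    then obtain xs ys where xs: "goodx xs" "le (bigmeet L N (map c xs)) x" "x \<in> A"
      and ys: "goodx ys" "le (bigmeet L N (map c ys)) y" "y \<in> A" by (auto simp: \<Phi>_def)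
    have g: "goodx (xs @ ys)" using xs ys by (auto simp: goodx_def)
    note bA = bm_in[OF gxA[OF g]]
    have "le (bigmeet L N (map c (xs@ys))) (bigmeet L N (map c xs))"
      using bm_glb[OF gxA[OF xs(1)] bA] bm_lb[OF gxA[OF g]] by simp
    hence 1: "le (bigmeet L N (map c (xs@ys))) x" using trans[OF bA bm_in[OF gxA[OF xs(1)]] xs(3) _ xs(2)] by blast
    have "le (bigmeet L N (map c (xs@ys))) (bigmeet L N (map c ys))"
      using bm_glb[OF gxA[OF ys(1)] bA] bm_lb[OF gxA[OF g]] by simp
    hence 2: "le (bigmeet L N (map c (xs@ys))) y" using trans[OF bA bm_in[OF gxA[OF ys(1)]] ys(3) _ ys(2)] by blast
    have "le (bigmeet L N (map c (xs@ys))) (mt x y)" using mglb[OF bA xs(3) ys(3) 1 2] .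
    then show "mt x y \<in> \<Phi>" using g cm[OF xs(3) ys(3)] by (auto simp: \<Phi>_def)
  qed
  have oP: "one L N \<in> \<Phi>"
    unfolding \<Phi>_def using O refl[OF O] by (auto simp: goodx_def bigmeet_def intro!: exI[of _ "[]"])
  have IP1: "\<Psi> \<subseteq> A" by (auto simp: \<Psi>_def)
  have IP2: "zer L N \<in> \<Psi>"
    unfolding \<Psi>_def using Z refl[OF Z] by (auto simp: goody_def bigjoin_def intro!: exI[of _ "[]"])
  have IP3: "\<forall>y\<in>\<Psi>. \<forall>x\<in>A. le x y \<longrightarrow> x \<in> \<Psi>"
  proof (intro ballI impI)
    fix y x assume a: "y \<in> \<Psi>" "x \<in> A" "le x y"
    then obtain ys where ys: "goody ys" "le y (bigjoin L N (map c ys))" "y \<in> A" by (auto simp: \<Psi>_def)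
    have "le x (bigjoin L N (map c ys))" using trans[OF a(2) ys(3) bj_in[OF gyA[OF ys(1)]] a(3) ys(2)] .
    then show "x \<in> \<Psi>" using a(2) ys(1) by (auto simp: \<Psi>_def)
  qed
  have IP4: "\<forall>x\<in>\<Psi>. \<forall>y\<in>\<Psi>. jn x y \<in> \<Psi>"
  proof (intro ballI)
    fix x y assume "x \<in> \<Psi>" "y \<in> \<Psi>"
    then obtain xs ys where xs: "goody xs" "le x (bigjoin L N (map c xs))" "x \<in> A"
      and ys: "goody ys" "le y (bigjoin L N (map c ys))" "y \<in> A" by (auto simp: \<Psi>_def)
    have g: "goody (xs @ ys)" using xs ys by (auto simp: goody_def)
    note bA = bj_in[OF gyA[OF g]]
    have "le (bigjoin L N (map c xs)) (bigjoin L N (map c (xs@ys)))"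
      using bj_lub[OF gyA[OF xs(1)] bA] bj_ub[OF gyA[OF g]] by simp
    hence 1: "le x (bigjoin L N (map c (xs@ys)))" using trans[OF xs(3) bj_in[OF gyA[OF xs(1)]] bA xs(2)] by blast
    have "le (bigjoin L N (map c ys)) (bigjoin L N (map c (xs@ys)))"
      using bj_lub[OF gyA[OF ys(1)] bA] bj_ub[OF gyA[OF g]] by simp
    hence 2: "le y (bigjoin L N (map c (xs@ys)))" using trans[OF ys(3) bj_in[OF gyA[OF ys(1)]] bA ys(2)] by blast
    have "le (jn x y) (bigjoin L N (map c (xs@ys)))" using jlub[OF xs(3) ys(3) bA 1 2] .
    then show "jn x y \<in> \<Psi>" using g cj[OF xs(3) ys(3)] by (auto simp: \<Psi>_def)
  qed
  have D: "\<Phi> \<inter> \<Psi> = {}"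
  proof (rule ccontr)
    assume "\<Phi> \<inter> \<Psi> \<noteq> {}"
    then obtain z xs ys where z: "z \<in> A" and xs: "goodx xs" "le (bigmeet L N (map c xs)) z"
      and ys: "goody ys" "le z (bigjoin L N (map c ys))" by (auto simp: \<Phi>_def \<Psi>_def)
    have key: "le (bigmeet L N (map c xs)) (bigjoin L N (map c ys))"
      using trans[OF bm_in[OF gxA[OF xs(1)]] z bj_in[OF gyA[OF ys(1)]] xs(2) ys(2)] .
    define r where "r = (\<lambda>i. bigmeet L (ks!i) (map snd (filter (\<lambda>p. fst p = i) xs)))"
    define s where "s = (\<lambda>i. bigjoin L (ks!i) (map snd (filter (\<lambda>p. fst p = i) ys)))"
    have rF: "r i \<in> F i" if "i < m" for i
    proof -
      have "set (map snd (filter (\<lambda>p. fst p = i) xs)) \<subseteq> F i" using xs(1) unfolding goodx_def by auto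
      then show ?thesis unfolding r_def using pf_bm[OF B PF[OF that]] by blast
    qed
    have rA: "r i \<in> car L (ks!i)" if "i < m" for i using rF[OF that] FA[OF that] by blast
    have sF: "s i \<in> car L (ks!i) - F i" if "i < m" for i
    proof -
      have "set (map snd (filter (\<lambda>p. fst p = i) ys)) \<subseteq> car L (ks!i) - F i" using ys(1) unfolding goody_def by auto
      then show ?thesis unfolding s_def using pf_bj[OF B PF[OF that]] by blast
    qed
    let ?R = "map (\<lambda>i. cylop L ks i (r i)) [0..<m]"
    let ?S = "map (\<lambda>i. cylop L ks i (s i)) [0..<m]"
    have RA: "set ?R \<subseteq> A" using cA rA by auto
    have SA: "set ?S \<subseteq> A" using cA sF by auto
    have 1: "le (bigmeet L N ?R) (bigmeet L N (map c xs))"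
    proof (rule bm_glb[OF gxA[OF xs(1)] bm_in[OF RA]], rule ballI)
      fix y assume "y \<in> set (map c xs)"
      then obtain i x where ix: "(i, x) \<in> set xs" "y = cylop L ks i x" by (auto simp: c_def)
      have im: "i < m" and xF: "x \<in> F i" using xs(1) ix by (auto simp: goodx_def)
      have xA: "x \<in> car L (ks!i)" using xF FA[OF im] by blast
      have "set (map snd (filter (\<lambda>p. fst p = i) xs)) \<subseteq> car L (ks!i)"
        using xs(1) FA by (force simp: goodx_def)
      moreover have "x \<in> set (map snd (filter (\<lambda>p. fst p = i) xs))" using ix by force
      ultimately have "mle L (ks!i) (r i) x" unfolding r_def using srt.bm_lb[OF S] by blast
      then have a: "le (cylop L ks i (r i)) y" using cyl_mono[OF SH im[unfolded m_def] rA[OF im] xA] ix N_def by simp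
      have b: "le (bigmeet L N ?R) (cylop L ks i (r i))"
        using bm_lb[OF RA] im by auto
      show "le (bigmeet L N ?R) y"
        using trans[OF bm_in[OF RA] cA[OF im rA[OF im]] cA[OF im xA] b] a ix by simp
    qed
    have 2: "le (bigjoin L N (map c ys)) (bigjoin L N ?S)"
    proof (rule bj_lub[OF gyA[OF ys(1)] bj_in[OF SA]], rule ballI)
      fix y assume "y \<in> set (map c ys)"
      then obtain i x where ix: "(i, x) \<in> set ys" "y = cylop L ks i x" by (auto simp: c_def)
      have im: "i < m" and xA: "x \<in> car L (ks!i)" using ys(1) ix by (auto simp: goody_def)
      have "set (map snd (filter (\<lambda>p. fst p = i) ys)) \<subseteq> car L (ks!i)"
        using ys(1) by (force simp: goody_def)
      moreover have "x \<in> set (map snd (filter (\<lambda>p. fst p = i) ys))" using ix by force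
      ultimately have "mle L (ks!i) x (s i)" unfolding s_def using srt.bj_ub[OF S] by blast
      then have a: "le y (cylop L ks i (s i))"
        using cyl_mono[OF SH im[unfolded m_def] xA] sF[OF im] ix N_def by simp
      have b: "le (cylop L ks i (s i)) (bigjoin L N ?S)"
        using bj_ub[OF SA] im by auto
      have sA: "s i \<in> car L (ks!i)" using sF[OF im] by blast
      show "le y (bigjoin L N ?S)"
        using trans[OF cA[OF im xA] cA[OF im sA] bj_in[OF SA] _ b] a ix by simp
    qed
    have "le (bigmeet L N ?R) (bigjoin L N ?S)"
    proof -
      have "le (bigmeet L N ?R) (bigjoin L N (map c ys))"
        using trans[OF bm_in[OF RA] bm_in[OF gxA[OF xs(1)]] bj_in[OF gyA[OF ys(1)]] 1 key] .
      then show ?thesis using trans[OF bm_in[OF RA] bj_in[OF gyA[OF ys(1)]] bj_in[OF SA] _ 2] by blast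
    qed
    moreover have "\<forall>i<length ks. r i \<in> car L (ks ! i) \<and> s i \<in> car L (ks ! i)"
      using rA sF m_def by blast
    ultimately obtain i where i: "i < m" "mle L (ks!i) (r i) (s i)"
      using AX unfolding axiom0_def N_def m_def by blast
    then have "s i \<in> F i" using PF[OF i(1)] rF[OF i(1)] sF[OF i(1)] unfolding prime_filter_def by blast
    then show False using sF[OF i(1)] by blast
  qed
  obtain G where G: "prime_filter L N G" "\<Phi> \<subseteq> G" "G \<inter> \<Psi> = {}"
    using pft[OF isFP oP IP1 IP2 IP3 IP4 D] by blast
  have "\<forall>i<length ks. \<forall>r\<in>car L (ks ! i). cylop L ks i r \<in> G \<longleftrightarrow> r \<in> F i"
  proof (intro allI impI ballI)
    fix i r assume i: "i < length ks" and rA: "r \<in> car L (ks!i)"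
    have im: "i < m" using i m_def by simp
    have crA: "cylop L ks i r \<in> A" using cA[OF im rA] .
    show "cylop L ks i r \<in> G \<longleftrightarrow> r \<in> F i"
    proof
      assume "r \<in> F i"
      then have "goodx [(i, r)]" using im by (simp add: goodx_def)
      moreover have "le (bigmeet L N (map c [(i, r)])) (cylop L ks i r)"
        using bm_lb[of "[cylop L ks i r]"] crA by (simp add: c_def)
      ultimately have "cylop L ks i r \<in> \<Phi>" using crA unfolding \<Phi>_def by blast
      then show "cylop L ks i r \<in> G" using G(2) by blast
    next
      assume cG: "cylop L ks i r \<in> G"
      show "r \<in> F i"
      proof (rule ccontr)
        assume "r \<notin> F i"
        then have "goody [(i, r)]" using im rA by (simp add: goody_def)
        moreover have "le (cylop L ks i r) (bigjoin L N (map c [(i, r)]))"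
          using bj_ub[of "[cylop L ks i r]"] crA by (simp add: c_def)
        ultimately have "cylop L ks i r \<in> \<Psi>" using crA unfolding \<Psi>_def by blast
        then show False using G(3) cG by blast
      qed
    qed
  qed
  then show ?thesis using G(1) N_def by blast
qed

end
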